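(* Let $\varepsilon>0$, $\bar\theta,\bar\varphi\in\mathbb{R}$, and let $P_1,P_2,P_3\in\mathbb{R}^3$ with $\|P_i\|\le1$ be $\varepsilon$-spanning for $(\bar\theta,\bar\varphi)$. Let $\theta,\varphi\in\mathbb{R}$ with $|\theta-\bar\theta|,|\varphi-\bar\varphi|\le\varepsilon$, and assume $\langle X(\theta,\varphi),P_i\rangle>0$ for $i=1,2,3$. Then $X(\theta,\varphi)\in\operatorname{span}^+(P_1,P_2,P_3)$.
   Context: $R(\alpha)=\begin{pmatrix}\cos\alpha&-\sin\alpha\\ \sin\alpha&\cos\alpha\end{pmatrix}$; $X(\theta,\varphi)=(\cos\theta\sin\varphi,\sin\theta\sin\varphi,\cos\varphi)^t$; $M(\theta,\varphi)=\begin{pmatrix}-\sin\theta&\cos\theta&0\\ -\cos\theta\cos\varphi&-\sin\theta\cos\varphi&\sin\varphi\end{pmatrix}$. For $M=M(\bar\theta,\bar\varphi)$, points $P_1,P_2,P_3$ of norm $\le1$ are $\varepsilon$-spanning for $(\bar\theta,\bar\varphi)$ if $\langle R(\pi/2)MP_1,MP_2\rangle$, $\langle R(\pi/2)MP_2,MP_3\rangle$, $\langle R(\pi/2)MP_3,MP_1\rangle$ are all $>2\varepsilon(\sqrt2+\varepsilon)$. $\operatorname{span}^+(P_1,P_2,P_3)=\{\sum\lambda_iP_i:\lambda_i>0\}$. *)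

theory Defs
  imports "HOL-Analysis.Analysis"
begin

definition rot :: "real \<Rightarrow> real^2^2" where
  "rot \<alpha> = vector [vector [cos \<alpha>, - sin \<alpha>], vector [sin \<alpha>, cos \<alpha>]]"

definition Xpt :: "real \<Rightarrow> real \<Rightarrow> real^3" where
  "Xpt \<theta> \<phi> = vector [cos \<theta> * sin \<phi>, sin \<theta> * sin \<phi>, cos \<phi>]"

definition Mmat :: "real \<Rightarrow> real \<Rightarrow> real^3^2" where
  "Mmat \<theta> \<phi> = vector [vector [- sin \<theta>, cos \<theta>, 0],
                           vector [- cos \<theta> * cos \<phi>, - sin \<theta> * cos \<phi>, sin \<phi>]]"

definition eps_spanning :: "real \<Rightarrow> real \<Rightarrow> real \<Rightarrow> real^3 \<Rightarrow> real^3 \<Rightarrow> real^3 \<Rightarrow> bool" where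
  "eps_spanning \<epsilon> \<theta>b \<phi>b P1 P2 P3 \<longleftrightarrow>
     norm P1 \<le> 1 \<and> norm P2 \<le> 1 \<and> norm P3 \<le> 1 \<and>
     (let M = Mmat \<theta>b \<phi>b; b = 2 * \<epsilon> * (sqrt 2 + \<epsilon>) in
       inner (rot (pi/2) *v (M *v P1)) (M *v P2) > b \<and>
       inner (rot (pi/2) *v (M *v P2)) (M *v P3) > b \<and>
       inner (rot (pi/2) *v (M *v P3)) (M *v P1) > b)"

definition span_pos :: "real^3 \<Rightarrow> real^3 \<Rightarrow> real^3 \<Rightarrow> (real^3) set" where
  "span_pos P1 P2 P3 = {l1 *\<^sub>R P1 + l2 *\<^sub>R P2 + l3 *\<^sub>R P3 | l1 l2 l3. l1 > 0 \<and> l2 > 0 \<and> l3 > 0}"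

end

theory Submission imports Defs begin


lemma chord: "(cos a - cos b)^2 + (sin a - sin b)^2 \<le> (a - b)^2" for a b :: real
proof -
  have e: "(cos a - cos b)^2 + (sin a - sin b)^2 = 2 - 2 * cos (a - b)"
    by (simp add: cos_diff power2_diff algebra_simps)
  have c: "cos (a - b) = 1 - 2 * sin ((a - b)/2) ^ 2"
  proof -
    have h: "2 * ((a - b) / 2) = a - b" by simp
    show ?thesis using cos_double_sin[of "(a-b)/2"] by (simp only: h)
  qed
  have "sin ((a - b)/2) ^ 2 \<le> ((a - b)/2)^2"
    using abs_sin_x_le_abs_x[of "(a-b)/2"] by (metis abs_ge_zero power2_abs power_mono)
  then show ?thesis using e c by (simp add: power_divide)
qed

lemma sq_norm3: "(norm (v::real^3))^2 = (v$1)^2 + (v$2)^2 + (v$3)^2"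
  unfolding power2_norm_eq_inner by (simp add: inner_vec_def sum_3 power2_eq_square)

lemma normle: "(norm (v::real^3))^2 \<le> r^2 \<Longrightarrow> 0 \<le> r \<Longrightarrow> norm v \<le> r"
  using power2_le_imp_le by blast

lemma aux: "(a * s - b * s)^2 + (c * s - d * s)^2 + (e - e)^2 = (s::real)^2 * ((a - b)^2 + (c - d)^2)"
  by (simp add: power2_eq_square algebra_simps)

lemma aux2: "(c * x - c * y)^2 + (s * x - s * y)^2 + z = (x - y)^2 * (c^2 + s^2) + (z::real)"
  by (simp add: power2_eq_square algebra_simps)

lemma aux3: "(c * x) * (c * x) + (s * x) * (s * x) + z * z = x^2 * (c^2 + s^2) + (z::real)^2"
  by (simp add: power2_eq_square algebra_simps)

lemma X1: "norm (Xpt t p - Xpt tb p) \<le> \<bar>t - tb\<bar>"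
proof (rule normle)
  have "(norm (Xpt t p - Xpt tb p))^2 = (sin p)^2 * ((cos t - cos tb)^2 + (sin t - sin tb)^2)"
    unfolding sq_norm3 Xpt_def by (simp only: vector_3 vector_minus_component aux)
  also have "\<dots> \<le> 1 * (t - tb)^2"
  proof (rule mult_mono)
    show "(sin p)^2 \<le> 1" using sin_cos_squared_add[of p] zero_le_power2[of "cos p"] by linarith
  qed (auto simp: chord)
  finally show "(norm (Xpt t p - Xpt tb p))^2 \<le> \<bar>t - tb\<bar>^2" by simp
qed simp

lemma X2: "norm (Xpt t p - Xpt t pb) \<le> \<bar>p - pb\<bar>"
proof (rule normle)
  have "(norm (Xpt t p - Xpt t pb))^2 = ((cos p - cos pb)^2 + (sin p - sin pb)^2)"
  proof -
    have "(norm (Xpt t p - Xpt t pb))^2 = (sin p - sin pb)^2 * ((cos t)^2 + (sin t)^2) + (cos p - cos pb)^2"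
      unfolding sq_norm3 Xpt_def by (simp only: vector_3 vector_minus_component aux2)
    then show ?thesis by (simp add: add.commute)
  qed
  also have "\<dots> \<le> (p - pb)^2" by (rule chord)
  finally show "(norm (Xpt t p - Xpt t pb))^2 \<le> \<bar>p - pb\<bar>^2" by simp
qed simp

lemma Xn: "Xpt t p \<bullet> Xpt t p = 1"
proof -
  have "Xpt t p \<bullet> Xpt t p = (sin p)^2 * ((cos t)^2 + (sin t)^2) + (cos p)^2"
    unfolding Xpt_def inner_vec_def sum_3 by (simp only: vector_3 inner_real_def aux3)
  then show ?thesis by (simp add: add.commute)
qed

lemma ident: "(P1 \<bullet> cross3 P2 P3) *\<^sub>R X = (X \<bullet> cross3 P2 P3) *\<^sub>R P1 + (X \<bullet> cross3 P3 P1) *\<^sub>R P2 + (X \<bullet> cross3 P1 P2) *\<^sub>R P3"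
  unfolding vec_eq_iff forall_3 cross3_def inner_vec_def sum_3 vector_3 vector_add_component vector_scaleR_component
  by (simp only: vector_3 inner_real_def real_scaleR_def) algebra
lemma rotM0: "rot (pi/2) *v v = vector [- v$2, v$1]"
  by (simp add: rot_def matrix_vector_mult_def vec_eq_iff forall_2 sum_2 vector_2)
lemma Mv: "Mmat t p *v P = vector [- sin t * P$1 + cos t * P$2, - cos t * cos p * P$1 - sin t * cos p * P$2 + sin p * P$3]"
  by (simp add: Mmat_def matrix_vector_mult_def vec_eq_iff forall_2 sum_3 vector_2 vector_3)
lemma rotM: "inner (rot (pi/2) *v (Mmat t p *v P)) (Mmat t p *v Q) = Xpt t p \<bullet> (cross3 P Q)"
  unfolding rotM0 Mv Xpt_def cross3_def inner_vec_def sum_2 sum_3 vector_2 vector_3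
  apply (simp only: vector_2 vector_3 inner_real_def)
  using sin_cos_squared_add[of t] sin_cos_squared_add[of p]
  by algebra

theorem lemma5p8:
  fixes \<epsilon> \<theta>b \<phi>b \<theta> \<phi> :: real and P1 P2 P3 :: "real^3"
  assumes "\<epsilon> > 0"
    and "norm P1 \<le> 1" "norm P2 \<le> 1" "norm P3 \<le> 1"
    and "eps_spanning \<epsilon> \<theta>b \<phi>b P1 P2 P3"
    and "\<bar>\<theta> - \<theta>b\<bar> \<le> \<epsilon>" "\<bar>\<phi> - \<phi>b\<bar> \<le> \<epsilon>"
    and "inner (Xpt \<theta> \<phi>) P1 > 0" "inner (Xpt \<theta> \<phi>) P2 > 0" "inner (Xpt \<theta> \<phi>) P3 > 0"
  shows "Xpt \<theta> \<phi> \<in> span_pos P1 P2 P3"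
proof -
  define X where "X = Xpt \<theta> \<phi>"
  define Xb where "Xb = Xpt \<theta>b \<phi>b"
  define b where "b = 2 * \<epsilon> * (sqrt 2 + \<epsilon>)"
  have sp: "Xb \<bullet> cross3 P1 P2 > b" "Xb \<bullet> cross3 P2 P3 > b" "Xb \<bullet> cross3 P3 P1 > b"
    using assms(5) unfolding eps_spanning_def Let_def rotM Xb_def b_def by auto
  have "norm (X - Xb) \<le> norm (Xpt \<theta> \<phi> - Xpt \<theta>b \<phi>) + norm (Xpt \<theta>b \<phi> - Xpt \<theta>b \<phi>b)"
    unfolding X_def Xb_def by (metis diff_add_cancel norm_triangle_ineq add_diff_eq)
  also have "\<dots> \<le> 2 * \<epsilon>" using X1[of \<theta> \<phi> \<theta>b] X2[of \<theta>b \<phi> \<phi>b] assms(6,7) by linarith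
  finally have dX: "norm (X - Xb) \<le> 2 * \<epsilon>" .
  have "sqrt 2 > 1" by simp
  hence "sqrt 2 + \<epsilon> > 1" using assms(1) by linarith
  hence "2 * \<epsilon> * (sqrt 2 + \<epsilon>) > 2 * \<epsilon> * 1" using assms(1) by (intro mult_strict_left_mono) auto
  hence b2: "b > 2 * \<epsilon>" unfolding b_def by simp
  have ncr: "norm (cross3 P Q) \<le> 1" if "norm P \<le> 1" "norm Q \<le> 1" for P Q
  proof -
    have "(norm (cross3 P Q))^2 \<le> (norm P * norm Q)^2" using norm_cross_dot[of P Q]
      by (metis le_add_same_cancel1 zero_le_power2)
    hence "norm (cross3 P Q) \<le> norm P * norm Q"
      by (rule power2_le_imp_le) simp
    also have "\<dots> \<le> 1" using that by (simp add: mult_le_one)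
    finally show ?thesis .
  qed
  have pos: "X \<bullet> cross3 P Q > 0" if "Xb \<bullet> cross3 P Q > b" "norm P \<le> 1" "norm Q \<le> 1" for P Q
  proof -
    have "\<bar>(X - Xb) \<bullet> cross3 P Q\<bar> \<le> norm (X - Xb) * norm (cross3 P Q)"
      by (rule Cauchy_Schwarz_ineq2)
    also have "\<dots> \<le> 2 * \<epsilon> * 1"
      using dX ncr[OF that(2,3)] assms(1) by (intro mult_mono) auto
    finally have "\<bar>(X - Xb) \<bullet> cross3 P Q\<bar> \<le> 2 * \<epsilon>" by simp
    moreover have "X \<bullet> cross3 P Q = Xb \<bullet> cross3 P Q + (X - Xb) \<bullet> cross3 P Q"
      by (simp add: inner_diff_left)
    ultimately show ?thesis using that(1) b2 by linarith
  qed
  define d1 where "d1 = X \<bullet> cross3 P2 P3"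
  define d2 where "d2 = X \<bullet> cross3 P3 P1"
  define d3 where "d3 = X \<bullet> cross3 P1 P2"
  define D where "D = P1 \<bullet> cross3 P2 P3"
  have d1: "d1 > 0" unfolding d1_def using pos sp assms(2-4) by blast
  have d2: "d2 > 0" unfolding d2_def using pos sp assms(2-4) by blast
  have d3: "d3 > 0" unfolding d3_def using pos sp assms(2-4) by blast
  have id: "D *\<^sub>R X = d1 *\<^sub>R P1 + d2 *\<^sub>R P2 + d3 *\<^sub>R P3"
    unfolding D_def d1_def d2_def d3_def by (rule ident)
  have "D = X \<bullet> (D *\<^sub>R X)" using Xn[of \<theta> \<phi>] unfolding X_def by simp
  also have "\<dots> = d1 * (X \<bullet> P1) + d2 * (X \<bullet> P2) + d3 * (X \<bullet> P3)"
    unfolding id by (simp add: inner_add_right)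
  finally have Dpos: "D > 0" using d1 d2 d3 assms(8-10) unfolding X_def
    by (metis add_pos_pos mult_pos_pos)
  have "X = (d1 / D) *\<^sub>R P1 + (d2 / D) *\<^sub>R P2 + (d3 / D) *\<^sub>R P3"
  proof -
    have "X = (1 / D) *\<^sub>R (D *\<^sub>R X)" using Dpos by simp
    also have "\<dots> = (d1 / D) *\<^sub>R P1 + (d2 / D) *\<^sub>R P2 + (d3 / D) *\<^sub>R P3"
      unfolding id by (simp add: scaleR_add_right)
    finally show ?thesis .
  qed
  then show ?thesis unfolding span_pos_def X_def using d1 d2 d3 Dpos by force
qed

end
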